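(* Let $r_{n,m}$ be the number of horizontally decorated paths ending at $(n,m)$. Then \[ r_{n,m}=r_{n,m-1}+(m+1)\,r_{n-1,m}\quad (n,m\ge1,\ n\ge m),\qquad r_{n,m}=0\quad(n<m),\qquad r_{n,0}=1\quad(n\ge0). \] Moreover, the number of relaxed binary trees of size $n$ equals $r_{n,n}$.
   Context: A horizontally decorated path is a lattice path starting at $(0,0)$ with steps $H=(1,0)$ and $V=(0,1)$ confined to the region $0\le y\le x$, in which each $H$ step is decorated by a number in $\{1,\dots,k+1\}$, where $k$ is the $y$-coordinate of that step. A (rooted, plane) binary tree is either a leaf or an internal node with an ordered pair of binary subtrees; its size is its number of internal nodes; postorder visits left subtree, right subtree, then root. A relaxed binary tree of size $n$ is obtained from a binary tree $T$ with $n$ internal nodes (its spine) by keeping the left-most leaf and turning every other leaf $\ell$ into a pointer to a vertex of $T$ which is an internal node or the left-most leaf and which precedes $\ell$ in postorder; two relaxed trees are equal iff they have the same spine and the same pointer targets. *)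

theory Defs
  imports Main
begin

datatype step = H nat | V

fun dp_ok :: "nat \<times> nat \<Rightarrow> step list \<Rightarrow> bool" where
  "dp_ok p [] = True"
| "dp_ok (x, y) (H d # s) = (1 \<le> d \<and> d \<le> y + 1 \<and> y \<le> x + 1 \<and> dp_ok (x + 1, y) s)"
| "dp_ok (x, y) (V # s) = (y + 1 \<le> x \<and> dp_ok (x, y + 1) s)"

fun dp_end :: "nat \<times> nat \<Rightarrow> step list \<Rightarrow> nat \<times> nat" where
  "dp_end p [] = p"
| "dp_end (x, y) (H d # s) = dp_end (x + 1, y) s"
| "dp_end (x, y) (V # s) = dp_end (x, y + 1) s"

definition hd_paths :: "nat \<Rightarrow> nat \<Rightarrow> step list set" where
  "hd_paths n m = {s. dp_ok (0, 0) s \<and> dp_end (0, 0) s = (n, m)}"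

definition r :: "nat \<Rightarrow> nat \<Rightarrow> nat" where
  "r n m = card (hd_paths n m)"

datatype btree = Leaf | Node btree btree

fun bsize :: "btree \<Rightarrow> nat" where
  "bsize Leaf = 0"
| "bsize (Node t1 t2) = Suc (bsize t1 + bsize t2)"

text \<open>Vertices are addressed by their position (path from the root; False = left, True = right).
  Postorder list of all vertices (leaves and internal nodes).\<close>
fun postord :: "btree \<Rightarrow> bool list list" where
  "postord Leaf = [[]]"
| "postord (Node t1 t2) = map (Cons False) (postord t1) @ map (Cons True) (postord t2) @ [[]]"

fun leaves :: "btree \<Rightarrow> bool list list" where
  "leaves Leaf = [[]]"
| "leaves (Node t1 t2) = map (Cons False) (leaves t1) @ map (Cons True) (leaves t2)"

fun internals :: "btree \<Rightarrow> bool list list" where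
  "internals Leaf = []"
| "internals (Node t1 t2) = map (Cons False) (internals t1) @ map (Cons True) (internals t2) @ [[]]"

definition leftmost_leaf :: "btree \<Rightarrow> bool list" where
  "leftmost_leaf T = hd (leaves T)"

definition precedes :: "btree \<Rightarrow> bool list \<Rightarrow> bool list \<Rightarrow> bool" where
  "precedes T v w = (\<exists>i j. i < j \<and> j < length (postord T) \<and> postord T ! i = v \<and> postord T ! j = w)"

text \<open>A relaxed binary tree is a spine T together with a pointer map f, defined exactly on
  the non-leftmost leaves, each pointing to an internal node or the leftmost leaf that
  precedes it in postorder.\<close>
definition relaxed_trees :: "nat \<Rightarrow> (btree \<times> (bool list \<Rightarrow> bool list option)) set" where
  "relaxed_trees n = {(T, f). bsize T = n
      \<and> dom f = set (leaves T) - {leftmost_leaf T}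
      \<and> (\<forall>l \<in> dom f. the (f l) \<in> set (internals T) \<union> {leftmost_leaf T}
                     \<and> precedes T (the (f l)) l)}"

end

theory Submission
  imports Defs "HOL-Library.FuncSet"
begin


fun stp :: "nat \<times> nat \<Rightarrow> step \<Rightarrow> nat \<times> nat" where
  "stp (x,y) (H d) = (x+1,y)" | "stp (x,y) V = (x, y+1)"
fun okst :: "nat \<times> nat \<Rightarrow> step \<Rightarrow> bool" where
  "okst (x,y) (H d) = (1 \<le> d \<and> d \<le> y+1 \<and> y \<le> x+1)" | "okst (x,y) V = (y+1 \<le> x)"

lemma dp_end_snoc: "dp_end p (s @ [z]) = stp (dp_end p s) z"
proof (induction p s rule: dp_end.induct)
  case (1 p) then show ?case by (cases p; cases z) auto
qed auto

lemma dp_ok_snoc: "dp_ok p (s @ [z]) = (dp_ok p s \<and> okst (dp_end p s) z)"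
proof (induction p s rule: dp_ok.induct)
  case (1 p) then show ?case by (cases p; cases z) auto
qed auto

lemma dp_len: "dp_end p s = (a,b) \<Longrightarrow> a + b = fst p + snd p + length s"
  by (induction p s arbitrary: a b rule: dp_end.induct) auto

lemma hd00: "hd_paths 0 0 = {[]}"
proof -
  have "s = []" if "dp_end (0,0) s = (0,0)" for s using dp_len[OF that] by simp
  then show ?thesis unfolding hd_paths_def by auto
qed

lemma hd_rec:
  assumes "(n,m) \<noteq> (0,0)"
  shows "hd_paths n m = (if 1 \<le> m \<and> m \<le> n then (\<lambda>s. s @ [V]) ` hd_paths n (m-1) else {})
     \<union> (if 1 \<le> n \<and> m \<le> n then (\<lambda>(s,d). s @ [H d]) ` (hd_paths (n-1) m \<times> {1..m+1}) else {})"
    (is "_ = ?A \<union> ?B")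
proof
  show "hd_paths n m \<subseteq> ?A \<union> ?B"
  proof
    fix s assume s: "s \<in> hd_paths n m"
    then have ok: "dp_ok (0,0) s" and e: "dp_end (0,0) s = (n,m)" by (auto simp: hd_paths_def)
    have "s \<noteq> []" using e assms by auto
    then obtain s' z where sz: "s = s' @ [z]" by (metis rev_exhaust)
    obtain a b where ab: "dp_end (0,0) s' = (a,b)" by (cases "dp_end (0,0) s'")
    have ok': "dp_ok (0,0) s'" "okst (a,b) z" using ok ab by (auto simp: sz dp_ok_snoc)
    have e': "stp (a,b) z = (n,m)" using e ab by (simp add: sz dp_end_snoc)
    show "s \<in> ?A \<union> ?B"
    proof (cases z)
      case (H d)
      then have "a = n - 1" "b = m" "1 \<le> n" using e' by auto
      moreover have "1 \<le> d" "d \<le> m+1" "m \<le> n" using ok'(2) H e' by auto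
      ultimately have "s \<in> ?B" using ok'(1) ab sz H
        by (auto simp: hd_paths_def intro!: image_eqI[of _ _ "(s', d)"])
      then show ?thesis by blast
    next
      case V
      then have "a = n" "b = m - 1" "1 \<le> m" using e' by auto
      moreover have "m \<le> n" using ok'(2) V e' \<open>1 \<le> m\<close> by auto
      ultimately have "s \<in> ?A" using ok'(1) ab sz V
        by (auto simp: hd_paths_def)
      then show ?thesis by blast
    qed
  qed
  show "?A \<union> ?B \<subseteq> hd_paths n m"
    by (auto simp: hd_paths_def dp_ok_snoc dp_end_snoc split: if_splits)
qed

lemma hd_fin: "finite (hd_paths n m)"
proof (induction "n+m" arbitrary: n m rule: less_induct)
  case less
  show ?case
  proof (cases "(n,m) = (0,0)")
    case True then show ?thesis by (auto simp: hd00)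
  next
    case False
    have f1: "finite (hd_paths n (m-1))" if "1 \<le> m" using less that by simp
    have f2: "finite (hd_paths (n-1) m)" if "1 \<le> n" using less that by simp
    show ?thesis using f1 f2 by (subst hd_rec[OF False]) auto
  qed
qed

lemma r_rec:
  assumes "(n,m) \<noteq> (0,0)"
  shows "r n m = (if 1 \<le> m \<and> m \<le> n then r n (m-1) else 0)
     + (if 1 \<le> n \<and> m \<le> n then (m+1) * r (n-1) m else 0)"
proof -
  let ?A = "(if 1 \<le> m \<and> m \<le> n then (\<lambda>s. s @ [V]) ` hd_paths n (m-1) else {})"
  let ?B = "(if 1 \<le> n \<and> m \<le> n then (\<lambda>(s,d). s @ [H d]) ` (hd_paths (n-1) m \<times> {1..m+1}) else {})"
  have d: "?A \<inter> ?B = {}" by auto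
  have cA: "card ?A = (if 1 \<le> m \<and> m \<le> n then r n (m-1) else 0)"
    by (auto simp: r_def card_image inj_on_def)
  have inj: "inj_on (\<lambda>(s,d). s @ [H d]) X" for X by (auto simp: inj_on_def)
  have cB: "card ?B = (if 1 \<le> n \<and> m \<le> n then (m+1) * r (n-1) m else 0)"
    by (auto simp: r_def card_image[OF inj] card_cartesian_product)
  have "r n m = card (?A \<union> ?B)" unfolding r_def by (subst hd_rec[OF assms]) simp
  also have "\<dots> = card ?A + card ?B" by (rule card_Un_disjoint) (auto simp: hd_fin)
  finally show ?thesis using cA cB by simp
qed

lemma r_zero: "n < m \<Longrightarrow> r n m = 0"
  using r_rec[of n m] by simp

lemma r_n0: "r n 0 = 1"
proof (induction n)
  case 0 then show ?case by (simp add: r_def hd00)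
next
  case (Suc n) then show ?case using r_rec[of "Suc n" 0] by simp
qed

lemma r_main: "1 \<le> n \<Longrightarrow> 1 \<le> m \<Longrightarrow> m \<le> n \<Longrightarrow> r n m = r n (m - 1) + (m + 1) * r (n - 1) m"
  using r_rec[of n m] by simp



fun w :: "nat \<Rightarrow> btree \<Rightarrow> nat" where
  "w k Leaf = k" | "w k (Node a b) = w k a * w (k + bsize a) b"

definition trees :: "nat \<Rightarrow> btree set" where "trees n = {T. bsize T = n}"

lemma trees0: "trees 0 = {Leaf}"
proof -
  have "T = Leaf" if "bsize T = 0" for T using that by (cases T) auto
  then show ?thesis by (auto simp: trees_def)
qed

lemma treesSuc: "trees (Suc n) = (\<Union>i\<in>{..n}. (\<lambda>(a,b). Node a b) ` (trees i \<times> trees (n-i)))"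
proof
  show "trees (Suc n) \<subseteq> (\<Union>i\<in>{..n}. (\<lambda>(a,b). Node a b) ` (trees i \<times> trees (n-i)))"
  proof
    fix T assume "T \<in> trees (Suc n)"
    then have s: "bsize T = Suc n" by (simp add: trees_def)
    then obtain a b where T: "T = Node a b" by (cases T) auto
    show "T \<in> (\<Union>i\<in>{..n}. (\<lambda>(a,b). Node a b) ` (trees i \<times> trees (n-i)))"
      using s T by (auto simp: trees_def intro!: UN_I[of "bsize a"] image_eqI[of _ _ "(a,b)"])
  qed
qed (auto simp: trees_def)

lemma trees_fin: "finite (trees n)"
proof (induction n rule: less_induct)
  case (less n)
  show ?case
  proof (cases n)
    case 0 then show ?thesis by (simp add: trees0)
  next
    case (Suc n') then show ?thesis using less by (auto simp: treesSuc)
  qed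
qed

definition A :: "nat \<Rightarrow> nat \<Rightarrow> nat" where "A k n = (\<Sum>T\<in>trees n. w k T)"

lemma A0: "A k 0 = k" by (simp add: A_def trees0)

lemma ASuc: "A k (Suc n) = (\<Sum>i\<le>n. A k i * A (k+i) (n-i))"
proof -
  have "A k (Suc n) = (\<Sum>i\<le>n. \<Sum>T\<in>(\<lambda>(a,b). Node a b) ` (trees i \<times> trees (n-i)). w k T)"
    unfolding A_def treesSuc
    apply (rule sum.UNION_disjoint)
      apply simp
     apply (simp add: trees_fin)
    apply (auto simp: trees_def)
    done
  also have "\<dots> = (\<Sum>i\<le>n. A k i * A (k+i) (n-i))"
  proof (rule sum.cong[OF refl])
    fix i assume "i \<in> {..n}"
    have "(\<Sum>T\<in>(\<lambda>(a,b). Node a b) ` (trees i \<times> trees (n-i)). w k T)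
        = (\<Sum>p\<in>trees i \<times> trees (n-i). w k (case p of (a,b) \<Rightarrow> Node a b))"
      by (subst sum.reindex) (auto simp: inj_on_def)
    also have "\<dots> = (\<Sum>p\<in>trees i \<times> trees (n-i). (case p of (a,b) \<Rightarrow> w k a * w (k+i) b))"
      by (rule sum.cong) (auto simp: trees_def)
    also have "\<dots> = (\<Sum>a\<in>trees i. \<Sum>b\<in>trees (n-i). w k a * w (k+i) b)"
      by (simp add: sum.cartesian_product)
    also have "\<dots> = A k i * A (k+i) (n-i)"
      by (simp add: A_def sum_product)
    finally show "(\<Sum>T\<in>(\<lambda>(a,b). Node a b) ` (trees i \<times> trees (n-i)). w k T) = A k i * A (k+i) (n-i)" .
  qed
  finally show ?thesis .
qed

primrec Fh :: "nat \<Rightarrow> nat \<Rightarrow> nat \<Rightarrow> nat" where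
  "Fh 0 = (\<lambda>k m. if m = 0 then 1 else 0)"
| "Fh (Suc h) = (\<lambda>k m. \<Sum>i\<le>m. A k i * Fh h (k+i) (m-i))"

lemma F_0m: "Fh h k 0 = k^h"
  by (induction h arbitrary: k) (auto simp: A0)

declare Fh.simps(2)[simp del]
lemma FSuc: "Fh (Suc h) k m = (\<Sum>i\<le>m. A k i * Fh h (k+i) (m-i))" by (simp add: Fh.simps)

lemma F_1: "Fh (Suc 0) k m = A k m"
proof -
  have e: "(\<lambda>i. A k i * (if m = i then 1 else 0)) = (\<lambda>i. if i = m then A k m else 0)"
    by auto
  have "Fh (Suc 0) k m = (\<Sum>i\<le>m. A k i * (if m = i then 1 else 0))"
    by (auto simp: Fh.simps intro!: sum.cong)
  also have "\<dots> = (\<Sum>i\<le>m. if i = m then A k m else 0)" by (simp only: e)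
  also have "\<dots> = A k m" by simp
  finally show ?thesis .
qed

lemma F_2: "Fh (Suc (Suc 0)) k m = A k (Suc m)"
proof -
  have "Fh (Suc (Suc 0)) k m = (\<Sum>i\<le>m. A k i * Fh (Suc 0) (k+i) (m-i))" by (rule FSuc)
  then show ?thesis by (simp only: F_1 ASuc)
qed

lemma F_id: "1 \<le> h \<Longrightarrow> 1 \<le> m \<Longrightarrow> Fh h k m = Fh (h+1) k (m-1) + (k+m) * Fh (h-1) k m"
proof (induction h arbitrary: k m)
  case 0 then show ?case by simp
next
  case (Suc h)
  obtain m' where m: "m = Suc m'" using Suc.prems by (cases m) auto
  show ?case
  proof (cases h)
    case 0 then show ?thesis using F_1 F_2 m by simp
  next
    case (Suc h'')
    have IH: "Fh h (k+i) (Suc m' - i) = Fh (Suc h) (k+i) (m' - i) + (k + m) * Fh h'' (k+i) (Suc m' - i)"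
      if "i \<le> m'" for i
      using Suc.IH[where k="k+i" and m="Suc m' - i"] that Suc m by (simp add: Suc_diff_le)
    have "Fh (Suc h) k m = (\<Sum>i\<le>m'. A k i * Fh h (k+i) (Suc m' - i)) + A k m * Fh h (k + m) 0"
      by (simp add: m FSuc)
    also have "(\<Sum>i\<le>m'. A k i * Fh h (k+i) (Suc m' - i)) =
       (\<Sum>i\<le>m'. A k i * Fh (Suc h) (k+i) (m' - i)) + (k+m) * (\<Sum>i\<le>m'. A k i * Fh h'' (k+i) (Suc m' - i))"
    proof -
      have "(\<Sum>i\<le>m'. A k i * Fh h (k+i) (Suc m' - i)) = (\<Sum>i\<le>m'. A k i * Fh (Suc h) (k+i) (m'-i) + (k+m) * (A k i * Fh h'' (k+i) (Suc m'-i)))"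
        apply (rule sum.cong[OF refl])
        subgoal for i using IH[of i] by (simp add: algebra_simps)
        done
      then show ?thesis by (simp add: sum.distrib sum_distrib_left)
    qed
    also have "(\<Sum>i\<le>m'. A k i * Fh (Suc h) (k+i) (m' - i)) = Fh (Suc h + 1) k (m - 1)"
      by (simp add: m FSuc)
    also have "Fh h k m = (\<Sum>i\<le>m'. A k i * Fh h'' (k+i) (Suc m' - i)) + A k m * (k+m)^h''"
      by (simp add: Suc m F_0m FSuc)
    ultimately show ?thesis using Suc by (simp add: F_0m algebra_simps)
  qed
qed

lemma r_F: "m \<le> n \<Longrightarrow> r n m = Fh (n - m + 1) 1 m"
proof (induction "n+m" arbitrary: n m rule: less_induct)
  case less
  show ?case
  proof (cases m)
    case 0 then show ?thesis by (simp add: r_n0 F_0m del: Fh.simps)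
  next
    case (Suc m')
    then have n1: "1 \<le> n" using less by simp
    have e0: "r n (m-1) = Fh (n - (m-1) + 1) 1 (m-1)" using less Suc by simp
    have "n - (m-1) + 1 = n - m + 2" using less Suc by simp
    then have e1: "r n (m-1) = Fh (n - m + 2) 1 (m-1)" using e0 by simp
    have e2: "r (n-1) m = Fh (n - m + 1 - 1) 1 m"
    proof (cases "m \<le> n - 1")
      case True
      then have "r (n-1) m = Fh (n - 1 - m + 1) 1 m" using less Suc by simp
      moreover have "n - 1 - m + 1 = n - m + 1 - 1" using True n1 by arith
      ultimately show ?thesis by simp
    next
      case False then have "m = n" using less by simp
      then show ?thesis using r_zero[of "n-1" m] Suc n1 by simp
    qed
    have "r n m = r n (m - 1) + (m + 1) * r (n - 1) m" using r_main n1 Suc less by simp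
    also have "\<dots> = Fh (n - m + 1) 1 m"
      using F_id[of "n-m+1" m 1] e1 e2 Suc less by (simp add: add.commute)
    finally show ?thesis .
  qed
qed



fun prec :: "'a list \<Rightarrow> 'a \<Rightarrow> 'a \<Rightarrow> bool" where
  "prec [] v u = False"
| "prec (x#xs) v u = ((x = v \<and> u \<in> set xs) \<or> prec xs v u)"

lemma prec_idx: "(\<exists>i j. i < j \<and> j < length L \<and> L!i = v \<and> L!j = u) = prec L v u"
proof (induction L)
  case Nil then show ?case by simp
next
  case (Cons x xs)
  show ?case
  proof
    assume "\<exists>i j. i < j \<and> j < length (x#xs) \<and> (x#xs)!i = v \<and> (x#xs)!j = u"
    then obtain i j where ij: "i < j" "j < length (x#xs)" "(x#xs)!i = v" "(x#xs)!j = u" by blast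
    then obtain j' where j: "j = Suc j'" by (cases j) auto
    show "prec (x#xs) v u"
    proof (cases i)
      case 0 then show ?thesis using ij j by auto
    next
      case (Suc i')
      then have "prec xs v u" using Cons.IH ij j by auto
      then show ?thesis by simp
    qed
  next
    assume "prec (x#xs) v u"
    then consider "x = v" "u \<in> set xs" | "prec xs v u" by auto
    then show "\<exists>i j. i < j \<and> j < length (x#xs) \<and> (x#xs)!i = v \<and> (x#xs)!j = u"
    proof cases
      case 1
      then obtain j' where "j' < length xs" "xs!j' = u" by (auto simp: in_set_conv_nth)
      then show ?thesis using 1 by (intro exI[of _ 0] exI[of _ "Suc j'"]) auto
    next
      case 2
      then obtain i j where "i < j" "j < length xs" "xs!i = v" "xs!j = u" using Cons.IH by blast
      then show ?thesis by (intro exI[of _ "Suc i"] exI[of _ "Suc j"]) auto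
    qed
  qed
qed

lemma prec_append: "prec (xs @ ys) v u = (prec xs v u \<or> prec ys v u \<or> (v \<in> set xs \<and> u \<in> set ys))"
  by (induction xs) auto

lemma prec_map_Cons: "prec (map (Cons b) xs) v u = (\<exists>v' u'. v = b#v' \<and> u = b#u' \<and> prec xs v' u')"
  by (induction xs) auto

lemma precedes_eq: "precedes T v u = prec (postord T) v u"
  by (simp add: precedes_def prec_idx)

lemma prec_NFF: "prec (postord (Node t1 t2)) (False#v) (False#u) = prec (postord t1) v u"
  by (auto simp: prec_append prec_map_Cons)
lemma prec_NTT: "prec (postord (Node t1 t2)) (True#v) (True#u) = prec (postord t2) v u"
  by (auto simp: prec_append prec_map_Cons)
lemma prec_NFT: "prec (postord (Node t1 t2)) (False#v) (True#u) = (v \<in> set (postord t1) \<and> u \<in> set (postord t2))"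
  by (auto simp: prec_append prec_map_Cons)
lemma prec_NTF: "\<not> prec (postord (Node t1 t2)) (True#v) (False#u)"
  by (auto simp: prec_append prec_map_Cons)
lemma prec_Nnil: "\<not> prec (postord (Node t1 t2)) [] u"
  by (auto simp: prec_append prec_map_Cons)

lemma leaves_ne: "leaves T \<noteq> []" by (induction T) auto
lemma leaves_sub: "set (leaves T) \<subseteq> set (postord T)" by (induction T) auto
lemma internals_sub: "set (internals T) \<subseteq> set (postord T)" by (induction T) auto
lemma li_disj: "set (leaves T) \<inter> set (internals T) = {}" by (induction T) auto
lemma int_distinct: "distinct (internals T)"
  by (induction T) (auto simp: distinct_map inj_on_def)
lemma int_len: "length (internals T) = bsize T" by (induction T) auto

lemma hd_leaves_Node: "hd (leaves (Node t1 t2)) = False # hd (leaves t1)"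
  using leaves_ne[of t1] by (cases "leaves t1") auto

lemma nothing_prec_lm: "\<not> prec (postord T) v (hd (leaves T))"
proof (induction T arbitrary: v)
  case Leaf then show ?case by simp
next
  case (Node t1 t2)
  show ?case
  proof (cases v)
    case Nil then show ?thesis by (simp add: prec_Nnil del: postord.simps)
  next
    case (Cons b v')
    then show ?thesis using Node.IH(1)[of v'] prec_NTF[of t1 t2 v'] prec_NFF[of t1 t2 v']
      by (cases b) (auto simp: hd_leaves_Node simp del: postord.simps leaves.simps)
  qed
qed

lemma lm_prec: "l \<in> set (leaves T) \<Longrightarrow> l \<noteq> hd (leaves T) \<Longrightarrow> prec (postord T) (hd (leaves T)) l"
proof (induction T arbitrary: l)
  case Leaf then show ?case by simp
next
  case (Node t1 t2)
  from Node.prems(1) consider l' where "l = False # l'" "l' \<in> set (leaves t1)"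
    | l' where "l = True # l'" "l' \<in> set (leaves t2)" by auto
  then show ?case
  proof cases
    case 1
    then show ?thesis using Node.IH(1)[of l'] Node.prems(2)
      by (simp add: hd_leaves_Node prec_NFF del: postord.simps leaves.simps)
  next
    case 2
    have "hd (leaves t1) \<in> set (postord t1)" using leaves_sub[of t1] leaves_ne[of t1] by auto
    moreover have "l' \<in> set (postord t2)" using leaves_sub[of t2] 2 by auto
    ultimately show ?thesis using 2
      by (simp add: hd_leaves_Node prec_NFT del: postord.simps leaves.simps)
  qed
qed

definition ib :: "btree \<Rightarrow> bool list \<Rightarrow> nat" where
  "ib T l = card {v \<in> set (internals T). prec (postord T) v l}"

lemma ib_F: "ib (Node t1 t2) (False#l) = ib t1 l"
proof -
  have "{v \<in> set (internals (Node t1 t2)). prec (postord (Node t1 t2)) v (False#l)}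
      = Cons False ` {v \<in> set (internals t1). prec (postord t1) v l}"
  proof (rule set_eqI)
    fix v
    show "v \<in> {v \<in> set (internals (Node t1 t2)). prec (postord (Node t1 t2)) v (False#l)} \<longleftrightarrow>
          v \<in> Cons False ` {v \<in> set (internals t1). prec (postord t1) v l}"
    proof (cases v)
      case Nil then show ?thesis using prec_Nnil[of t1 t2] by (auto simp del: postord.simps)
    next
      case (Cons b v')
      then show ?thesis using prec_NTF[of t1 t2 v' l] prec_NFF[of t1 t2 v' l]
        by (cases b) (auto simp del: postord.simps)
    qed
  qed
  then show ?thesis unfolding ib_def by (simp add: card_image del: postord.simps internals.simps)
qed

lemma ib_T: "l \<in> set (postord t2) \<Longrightarrow> ib (Node t1 t2) (True#l) = bsize t1 + ib t2 l"
proof -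
  assume l: "l \<in> set (postord t2)"
  have "{v \<in> set (internals (Node t1 t2)). prec (postord (Node t1 t2)) v (True#l)}
      = Cons False ` set (internals t1) \<union> Cons True ` {v \<in> set (internals t2). prec (postord t2) v l}"
  proof (rule set_eqI)
    fix v
    show "v \<in> {v \<in> set (internals (Node t1 t2)). prec (postord (Node t1 t2)) v (True#l)} \<longleftrightarrow>
          v \<in> Cons False ` set (internals t1) \<union> Cons True ` {v \<in> set (internals t2). prec (postord t2) v l}"
    proof (cases v)
      case Nil then show ?thesis using prec_Nnil[of t1 t2] by (auto simp del: postord.simps)
    next
      case (Cons b v')
      then show ?thesis using prec_NTT[of t1 t2 v' l] prec_NFT[of t1 t2 v' l] l internals_sub[of t1]
        by (cases b) (auto simp del: postord.simps)
    qed
  qed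
  moreover have "card (Cons False ` set (internals t1) \<union> Cons True ` {v \<in> set (internals t2). prec (postord t2) v l})
     = card (Cons False ` set (internals t1)) + card (Cons True ` {v \<in> set (internals t2). prec (postord t2) v l})"
    by (rule card_Un_disjoint) auto
  moreover have "card (Cons False ` set (internals t1)) = bsize t1"
    by (simp add: card_image distinct_card int_distinct int_len)
  moreover have "card (Cons True ` {v \<in> set (internals t2). prec (postord t2) v l}) = ib t2 l"
    by (simp add: card_image ib_def)
  ultimately show ?thesis unfolding ib_def by simp
qed

lemma prod_ib: "(\<Prod>l\<in>set (leaves T). k + ib T l) = w k T"
proof (induction T arbitrary: k)
  case Leaf then show ?case by (simp add: ib_def)
next
  case (Node t1 t2)
  have "(\<Prod>l\<in>set (leaves (Node t1 t2)). k + ib (Node t1 t2) l)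
     = (\<Prod>l\<in>Cons False ` set (leaves t1). k + ib (Node t1 t2) l) * (\<Prod>l\<in>Cons True ` set (leaves t2). k + ib (Node t1 t2) l)"
    by (simp add: prod.union_disjoint image_Un del: ib_def)
      (rule prod.union_disjoint; auto)
  also have "(\<Prod>l\<in>Cons False ` set (leaves t1). k + ib (Node t1 t2) l) = (\<Prod>l\<in>set (leaves t1). k + ib t1 l)"
    by (simp add: prod.reindex ib_F)
  also have "(\<Prod>l\<in>Cons True ` set (leaves t2). k + ib (Node t1 t2) l) = (\<Prod>l\<in>set (leaves t2). (k + bsize t1) + ib t2 l)"
    using leaves_sub[of t2] by (auto simp: prod.reindex ib_T intro!: prod.cong)
  finally show ?case using Node.IH by simp
qed



lemma card_maps:
  fixes D :: "'a set" and S :: "'a \<Rightarrow> 'b set"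
  assumes D: "finite D" and S: "\<And>l. l \<in> D \<Longrightarrow> finite (S l)"
  shows "card {f :: 'a \<Rightarrow> 'b option. dom f = D \<and> (\<forall>l\<in>dom f. the (f l) \<in> S l)} = (\<Prod>l\<in>D. card (S l))
       \<and> finite {f :: 'a \<Rightarrow> 'b option. dom f = D \<and> (\<forall>l\<in>dom f. the (f l) \<in> S l)}"
proof -
  define G :: "('a \<Rightarrow> 'b) \<Rightarrow> 'a \<Rightarrow> 'b option" where "G = (\<lambda>g l. if l \<in> D then Some (g l) else None)"
  have domG: "dom (G g) = D" for g by (simp add: G_def dom_def)
  have theG: "l \<in> D \<Longrightarrow> the (G g l) = g l" for g l by (simp add: G_def)
  have img: "{f. dom f = D \<and> (\<forall>l\<in>dom f. the (f l) \<in> S l)} = G ` (PiE D S)"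
  proof
    show "{f. dom f = D \<and> (\<forall>l\<in>dom f. the (f l) \<in> S l)} \<subseteq> G ` (PiE D S)"
    proof
      fix f assume f: "f \<in> {f. dom f = D \<and> (\<forall>l\<in>dom f. the (f l) \<in> S l)}"
      then have fd: "dom f = D" and fs: "\<forall>l\<in>D. the (f l) \<in> S l" by auto
      have "f = G (restrict (\<lambda>l. the (f l)) D)"
      proof
        fix l show "f l = G (restrict (\<lambda>l. the (f l)) D) l"
        proof (cases "l \<in> D")
          case True then have "l \<in> dom f" using fd by simp
          then show ?thesis using True by (auto simp: G_def)
        next
          case False then have "l \<notin> dom f" using fd by simp
          then show ?thesis using False by (simp add: G_def domIff)
        qed
      qed
      moreover have "restrict (\<lambda>l. the (f l)) D \<in> PiE D S" using fs by (simp add: restrict_PiE_iff)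
      ultimately show "f \<in> G ` (PiE D S)" by blast
    qed
    show "G ` (PiE D S) \<subseteq> {f. dom f = D \<and> (\<forall>l\<in>dom f. the (f l) \<in> S l)}"
    proof
      fix f assume "f \<in> G ` (PiE D S)"
      then obtain g where g: "g \<in> PiE D S" "f = G g" by blast
      have "\<forall>l\<in>D. the (f l) \<in> S l" using g theG by (auto simp: PiE_mem)
      then show "f \<in> {f. dom f = D \<and> (\<forall>l\<in>dom f. the (f l) \<in> S l)}" using g(2) domG by simp
    qed
  qed
  have inj: "inj_on G (PiE D S)"
  proof
    fix g1 g2 assume g: "g1 \<in> PiE D S" "g2 \<in> PiE D S" "G g1 = G g2"
    show "g1 = g2"
    proof
      fix l show "g1 l = g2 l"
      proof (cases "l \<in> D")
        case True
        have "G g1 l = G g2 l" using g(3) by simp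
        then show ?thesis using True unfolding G_def by simp
      next
        case False then show ?thesis using PiE_arb[OF g(1) False] PiE_arb[OF g(2) False] by simp
      qed
    qed
  qed
  have "card (G ` (PiE D S)) = (\<Prod>l\<in>D. card (S l))"
    using card_image[OF inj] card_PiE[OF D, of S] by simp
  moreover have "finite (G ` (PiE D S))" proof -
    have "finite (PiE D S)" using D S by (intro finite_PiE) auto
    then show ?thesis by simp
  qed
  ultimately show ?thesis unfolding img by simp
qed


definition M :: "btree \<Rightarrow> (bool list \<Rightarrow> bool list option) set" where
  "M T = {f. dom f = set (leaves T) - {leftmost_leaf T}
      \<and> (\<forall>l \<in> dom f. the (f l) \<in> set (internals T) \<union> {leftmost_leaf T}
                     \<and> precedes T (the (f l)) l)}"

lemma Sigma_gen: "{(a,b). P a \<and> Q a b} = Sigma {a. P a} (\<lambda>a. {b. Q a b})" by auto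

lemma relaxed_Sigma: "relaxed_trees n = Sigma (trees n) M"
  unfolding relaxed_trees_def trees_def M_def by (rule Sigma_gen)

lemma card_M: "card (M T) = w 1 T \<and> finite (M T)"
proof -
  let ?lm = "leftmost_leaf T"
  let ?D = "set (leaves T) - {?lm}"
  have lm_in: "?lm \<in> set (leaves T)" using leaves_ne[of T] by (simp add: leftmost_leaf_def)
  have lm_ni: "?lm \<notin> set (internals T)" using lm_in li_disj[of T] by blast
  have S: "{v. v \<in> set (internals T) \<union> {?lm} \<and> precedes T v l}
      = insert ?lm {v \<in> set (internals T). prec (postord T) v l}" if "l \<in> ?D" for l
    using that lm_prec[of l T] by (auto simp: precedes_eq leftmost_leaf_def)
  have cS: "card {v. v \<in> set (internals T) \<union> {?lm} \<and> precedes T v l} = 1 + ib T l" if "l \<in> ?D" for l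
    by (subst S[OF that]) (simp add: ib_def lm_ni)
  have fS: "finite {v. v \<in> set (internals T) \<union> {?lm} \<and> precedes T v l}" for l by auto
  have cm: "card (M T) = (\<Prod>l\<in>?D. card {v. v \<in> set (internals T) \<union> {?lm} \<and> precedes T v l}) \<and> finite (M T)"
  proof -
    have "M T = {f. dom f = ?D \<and> (\<forall>l\<in>dom f. the (f l) \<in> {v. v \<in> set (internals T) \<union> {?lm} \<and> precedes T v l})}"
      unfolding M_def by (simp only: mem_Collect_eq)
    then show ?thesis by (simp only:) (rule card_maps, auto simp: fS)
  qed
  have "(\<Prod>l\<in>?D. card {v. v \<in> set (internals T) \<union> {?lm} \<and> precedes T v l}) = (\<Prod>l\<in>?D. 1 + ib T l)"
    by (rule prod.cong[OF refl], rule cS)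
  also have "\<dots> = (1 + ib T ?lm) * (\<Prod>l\<in>?D. 1 + ib T l)"
    using nothing_prec_lm[of T] by (simp add: ib_def leftmost_leaf_def)
  also have "\<dots> = (\<Prod>l\<in>set (leaves T). 1 + ib T l)"
    by (rule prod.remove[symmetric]) (auto simp: lm_in)
  also have "\<dots> = w 1 T" by (rule prod_ib)
  finally show ?thesis using cm by simp
qed

lemma card_relaxed: "card (relaxed_trees n) = r n n"
proof -
  have "card (relaxed_trees n) = (\<Sum>T\<in>trees n. card (M T))"
    unfolding relaxed_Sigma by (rule card_SigmaI) (auto simp: trees_fin card_M)
  also have "\<dots> = A 1 n" unfolding A_def by (rule sum.cong) (auto simp: card_M)
  also have "\<dots> = r n n" using r_F[of n n] F_1 by simp
  finally show ?thesis .
qed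

theorem proposition2p6:
  shows "(\<forall>n m. 1 \<le> n \<longrightarrow> 1 \<le> m \<longrightarrow> m \<le> n \<longrightarrow> r n m = r n (m - 1) + (m + 1) * r (n - 1) m)
       \<and> (\<forall>n m. n < m \<longrightarrow> r n m = 0)
       \<and> (\<forall>n. r n 0 = 1)
       \<and> (\<forall>n. card (relaxed_trees n) = r n n)"
  using r_main r_zero r_n0 card_relaxed by blast


end
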